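(* Let $X$ be a real Hilbert space, $r>0$, and let $Z\subset X$ be an $r$-prox-regular set. Then the following two conditions are equivalent: (a) there exists $\rho\in(0,r/5)$ such that for every $x\in Z$ there exists $\bar x\in Z$ with $|x-\bar x|^2+\rho^2<2r\rho$ and $B_{3\rho}(\bar x)\subset Z$; (b) there exist $s>0$ and $d>0$ such that for every $x\in Z$ there exists $x^*\in Z$ with $|x-x^*|\le d$ such that for all $\alpha\in(0,1]$ we have $x+\alpha(x^*-x)+\alpha B_s(0)\subset Z$.
   Context: $X$ is a real Hilbert space with scalar product $\langle\cdot,\cdot\rangle$ and norm $|\cdot|$; $\mathrm{dist}(x,Z)=\inf\{|x-z|:z\in Z\}$; $B_\delta(x)=\{y\in X:|y-x|\le\delta\}$ is the closed ball, and $x+\alpha B_s(0)=\{x+\alpha v: |v|\le s\}$. A closed connected set $Z\subset X$ is called $r$-prox-regular ($r>0$) if for every $y\in X$ with $\mathrm{dist}(y,Z)=d\in(0,r)$ there exists $x\in Z$ such that $\mathrm{dist}\left(x+\frac{r}{d}(y-x),Z\right)=\frac{r}{d}|y-x|=r$. *)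

theory Defs
  imports "HOL-Analysis.Analysis"
begin

definition prox_regular :: "real \<Rightarrow> ('a::{real_inner,complete_space}) set \<Rightarrow> bool" where
  "prox_regular r Z \<longleftrightarrow> r > 0 \<and> closed Z \<and> connected Z \<and>
     (\<forall>y d. infdist y Z = d \<and> 0 < d \<and> d < r \<longrightarrow>
        (\<exists>x\<in>Z. infdist (x + (r / d) *\<^sub>R (y - x)) Z = (r / d) * norm (y - x)
               \<and> (r / d) * norm (y - x) = r))"

end

theory Submission
  imports Defs
begin

lemma quad_id:
  fixes x w c :: "'a::real_inner"
  shows "(norm (c - ((1-a) *\<^sub>R x + a *\<^sub>R w)))\<^sup>2 =
     (1-a) * (norm (c - x))\<^sup>2 + a * (norm (c - w))\<^sup>2 - a*(1-a) * (norm (x - w))\<^sup>2"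
  unfolding power2_norm_eq_inner
  by (simp add: inner_diff_left inner_diff_right inner_add_left
      inner_add_right inner_commute algebra_simps)

lemma far_from_ball:
  fixes c w :: "'a::real_inner"
  assumes "cball w e \<subseteq> Z" "e \<ge> 0" "r > 0" "\<forall>z\<in>Z. dist c z \<ge> r"
  shows "norm (c - w) \<ge> r + e"
proof (rule ccontr)
  assume H: "\<not> norm (c - w) \<ge> r + e"
  show False
  proof (cases "norm (c - w) \<le> e")
    case True
    then have "c \<in> Z" using assms(1) by (auto simp: dist_norm norm_minus_commute)
    then show False using assms(3,4) by force
  next
    case False
    define z where "z = w + (e / norm (c - w)) *\<^sub>R (c - w)"
    have np: "norm (c - w) > 0" using False assms(2) by linarith
    have "dist w z = e" using np assms(2) by (simp add: z_def dist_norm)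
    then have "z \<in> Z" using assms(1) by auto
    have "c - z = (1 - e / norm (c - w)) *\<^sub>R (c - w)" by (simp add: z_def algebra_simps)
    then have "norm (c - z) = \<bar>1 - e / norm (c - w)\<bar> * norm (c - w)" by simp
    also have "\<dots> = norm (c - w) - e" using np False
      by (simp add: abs_if field_simps)
    finally have "dist c z < r" using H by (simp add: dist_norm)
    then show False using assms(4) \<open>z \<in> Z\<close> by force
  qed
qed

lemma cone_in:
  fixes Z :: "'a::{real_inner,complete_space} set"
  assumes pr: "prox_regular r Z" and xZ: "x \<in> Z" and "xb \<in> Z"
    and D: "(norm (x - xb))\<^sup>2 + \<rho>\<^sup>2 < 2 * r * \<rho>" and rp: "\<rho> > 0" "\<rho> < r / 5"
    and B: "cball xb (3 * \<rho>) \<subseteq> Z" and al: "0 < a" "a \<le> 1" and v: "norm v \<le> \<rho>"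
  shows "x + a *\<^sub>R (xb - x) + a *\<^sub>R v \<in> Z"
proof (rule ccontr)
  define w where "w = xb + v"
  define y where "y = x + a *\<^sub>R (xb - x) + a *\<^sub>R v"
  have yw: "y = (1-a) *\<^sub>R x + a *\<^sub>R w" by (simp add: y_def w_def algebra_simps)
  assume "y \<notin> Z"
  have r0: "r > 0" and cl: "closed Z" using pr by (auto simp: prox_regular_def)
  have Bw: "cball w (2*\<rho>) \<subseteq> Z"
  proof
    fix p assume "p \<in> cball w (2*\<rho>)"
    then have "dist w p \<le> 2*\<rho>" by simp
    moreover have "dist xb w \<le> \<rho>" using v by (simp add: w_def dist_norm)
    ultimately have "dist xb p \<le> 3*\<rho>" using dist_triangle[of xb p w] by linarith
    then show "p \<in> Z" using B by auto
  qed
  have nxw: "norm (x - w) \<le> norm (x - xb) + \<rho>"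
    using norm_triangle_ineq4[of "x - xb" v] v by (simp add: w_def algebra_simps)
  have sq: "(norm (x - xb) + \<rho>)\<^sup>2 < 4 * r * \<rho>"
  proof -
    have "(norm (x - xb) + \<rho>)\<^sup>2 \<le> 2 * (norm (x - xb))\<^sup>2 + 2 * \<rho>\<^sup>2"
      using sum_squares_bound[of "norm (x - xb)" \<rho>]
      by (simp add: power2_eq_square algebra_simps)
    then show ?thesis using D by linarith
  qed
  have xw2: "(norm (x - w))\<^sup>2 < 4 * r * \<rho>"
    using nxw sq by (meson le_less_trans norm_ge_zero power_mono)
  have "(4 * r * \<rho>) < r\<^sup>2" using rp r0 by (simp add: power2_eq_square)
  have "norm (x - w) < r"
    using xw2 \<open>4 * r * \<rho> < r\<^sup>2\<close> r0 by (smt (verit) power_mono)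
  have "y - x = a *\<^sub>R (w - x)" by (simp add: yw algebra_simps)
  then have "dist y x \<le> norm (x - w)" using al
    by (simp add: dist_norm norm_minus_commute mult_left_le_one_le)
  define d where "d = infdist y Z"
  have d0: "d > 0" using \<open>y \<notin> Z\<close> cl xZ
    by (metis d_def in_closed_iff_infdist_zero infdist_nonneg less_eq_real_def empty_iff)
  have "d \<le> dist y x" using infdist_le[OF xZ] d_def by simp
  then have dr: "d < r" using \<open>dist y x \<le> norm (x - w)\<close> \<open>norm (x - w) < r\<close> by linarith
  obtain x' where x'Z: "x' \<in> Z" and
    h1: "infdist (x' + (r / d) *\<^sub>R (y - x')) Z = (r / d) * norm (y - x')"
    and h2: "(r / d) * norm (y - x') = r"
    using pr d0 dr unfolding prox_regular_def d_def by blast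
  define c where "c = x' + (r / d) *\<^sub>R (y - x')"
  have ny: "norm (y - x') = d" using h2 r0 d0 by (simp add: field_simps)
  have far: "\<forall>z\<in>Z. dist c z \<ge> r" using h1 h2 infdist_le unfolding c_def by metis
  have "c - y = (r / d - 1) *\<^sub>R (y - x')" by (simp add: c_def algebra_simps)
  then have "norm (c - y) = (r/d - 1) * d" using ny d0 dr by simp
  also have "\<dots> = r - d" using d0 by (simp add: field_simps)
  finally have cy: "norm (c - y) < r" using d0 by simp
  have cx: "norm (c - x) \<ge> r" using far xZ by (simp add: dist_norm)
  have cw: "norm (c - w) \<ge> r + 2*\<rho>" using far_from_ball[OF Bw _ r0 far] rp by simp
  have cx2: "(norm (c - x))\<^sup>2 \<ge> r\<^sup>2" using cx r0 by (simp add: power_mono)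
  have cw2: "(norm (c - w))\<^sup>2 \<ge> (r + 2*\<rho>)\<^sup>2" using cw r0 rp by (simp add: power_mono)
  have "(norm (c - y))\<^sup>2 = (1-a) * (norm (c - x))\<^sup>2 + a * (norm (c - w))\<^sup>2 - a*(1-a) * (norm (x - w))\<^sup>2"
    using quad_id[of c a x w] yw by simp
  also have "\<dots> \<ge> (1-a) * r\<^sup>2 + a * (r + 2*\<rho>)\<^sup>2 - a * (4*r*\<rho>)"
  proof -
    have "(1-a) * (norm (c - x))\<^sup>2 \<ge> (1-a) * r\<^sup>2" using cx2 al by (simp add: mult_left_mono)
    moreover have "a * (norm (c - w))\<^sup>2 \<ge> a * (r + 2*\<rho>)\<^sup>2" using cw2 al by (simp add: mult_left_mono)
    moreover have "a*(1-a) * (norm (x - w))\<^sup>2 \<le> a * (4*r*\<rho>)"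
    proof -
      have "a*(1-a) * (norm (x - w))\<^sup>2 \<le> a * (norm (x - w))\<^sup>2"
        using al by (simp add: mult_right_le_one_le mult_left_le_one_le mult_right_mono)
      also have "\<dots> \<le> a * (4*r*\<rho>)" using xw2 al by (simp add: mult_left_mono)
      finally show ?thesis .
    qed
    ultimately show ?thesis by linarith
  qed
  finally have "(norm (c - y))\<^sup>2 \<ge> r\<^sup>2 + a * (4*\<rho>\<^sup>2)"
    by (simp add: power2_eq_square algebra_simps)
  moreover have "(norm (c - y))\<^sup>2 < r\<^sup>2" using cy by (simp add: power_strict_mono)
  moreover have "a * (4*\<rho>\<^sup>2) > 0" using al rp by simp
  ultimately show False by linarith
qed

theorem lemma1p6:
  fixes Z :: "'a::{real_inner,complete_space} set" and r :: real
  assumes "r > 0" and "prox_regular r Z"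
  shows "(\<exists>\<rho>. 0 < \<rho> \<and> \<rho> < r / 5 \<and>
            (\<forall>x\<in>Z. \<exists>xb\<in>Z. (norm (x - xb))\<^sup>2 + \<rho>\<^sup>2 < 2 * r * \<rho> \<and> cball xb (3 * \<rho>) \<subseteq> Z))
     \<longleftrightarrow>
         (\<exists>s>0. \<exists>d>0. \<forall>x\<in>Z. \<exists>xs\<in>Z. norm (x - xs) \<le> d \<and>
            (\<forall>\<alpha>. 0 < \<alpha> \<and> \<alpha> \<le> 1 \<longrightarrow>
               (\<forall>v. norm v \<le> s \<longrightarrow> x + \<alpha> *\<^sub>R (xs - x) + \<alpha> *\<^sub>R v \<in> Z)))"
proof
  assume "\<exists>\<rho>. 0 < \<rho> \<and> \<rho> < r / 5 \<and>
            (\<forall>x\<in>Z. \<exists>xb\<in>Z. (norm (x - xb))\<^sup>2 + \<rho>\<^sup>2 < 2 * r * \<rho> \<and> cball xb (3 * \<rho>) \<subseteq> Z)"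
  then obtain \<rho> where rp: "0 < \<rho>" "\<rho> < r / 5" and
    H: "\<forall>x\<in>Z. \<exists>xb\<in>Z. (norm (x - xb))\<^sup>2 + \<rho>\<^sup>2 < 2 * r * \<rho> \<and> cball xb (3 * \<rho>) \<subseteq> Z" by blast
  show "\<exists>s>0. \<exists>d>0. \<forall>x\<in>Z. \<exists>xs\<in>Z. norm (x - xs) \<le> d \<and>
            (\<forall>\<alpha>. 0 < \<alpha> \<and> \<alpha> \<le> 1 \<longrightarrow>
               (\<forall>v. norm v \<le> s \<longrightarrow> x + \<alpha> *\<^sub>R (xs - x) + \<alpha> *\<^sub>R v \<in> Z))"
  proof -
  have "\<forall>x\<in>Z. \<exists>xs\<in>Z. norm (x - xs) \<le> r \<and>
            (\<forall>\<alpha>. 0 < \<alpha> \<and> \<alpha> \<le> 1 \<longrightarrow>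
               (\<forall>v. norm v \<le> \<rho> \<longrightarrow> x + \<alpha> *\<^sub>R (xs - x) + \<alpha> *\<^sub>R v \<in> Z))"
  proof
    fix x assume xZ: "x \<in> Z"
    then obtain xb where xb: "xb \<in> Z" "(norm (x - xb))\<^sup>2 + \<rho>\<^sup>2 < 2 * r * \<rho>" "cball xb (3 * \<rho>) \<subseteq> Z"
      using H by blast
    have "2 * r * \<rho> < r\<^sup>2" using rp assms(1) by (simp add: power2_eq_square)
    then have "(norm (x - xb))\<^sup>2 < r\<^sup>2" using xb(2) rp
      using zero_le_power2[of \<rho>] by linarith
    then have "norm (x - xb) < r" using assms(1) by (meson power_less_imp_less_base less_imp_le)
    then have "norm (x - xb) \<le> r" by simp
    then show "\<exists>xs\<in>Z. norm (x - xs) \<le> r \<and>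
            (\<forall>\<alpha>. 0 < \<alpha> \<and> \<alpha> \<le> 1 \<longrightarrow>
               (\<forall>v. norm v \<le> \<rho> \<longrightarrow> x + \<alpha> *\<^sub>R (xs - x) + \<alpha> *\<^sub>R v \<in> Z))"
      using cone_in[OF assms(2) xZ xb(1) xb(2) rp xb(3)] xb(1) by blast
  qed
  then show ?thesis using rp assms(1) by blast
  qed
next
  assume "\<exists>s>0. \<exists>d>0. \<forall>x\<in>Z. \<exists>xs\<in>Z. norm (x - xs) \<le> d \<and>
            (\<forall>\<alpha>. 0 < \<alpha> \<and> \<alpha> \<le> 1 \<longrightarrow>
               (\<forall>v. norm v \<le> s \<longrightarrow> x + \<alpha> *\<^sub>R (xs - x) + \<alpha> *\<^sub>R v \<in> Z))"
  then obtain s d where s: "s > 0" and d: "d > 0" and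
    H: "\<forall>x\<in>Z. \<exists>xs\<in>Z. norm (x - xs) \<le> d \<and>
            (\<forall>\<alpha>. 0 < \<alpha> \<and> \<alpha> \<le> 1 \<longrightarrow>
               (\<forall>v. norm v \<le> s \<longrightarrow> x + \<alpha> *\<^sub>R (xs - x) + \<alpha> *\<^sub>R v \<in> Z))" by blast
  define a where "a = min 1 (min (r / (2 * s)) (r * s / (2 * (d\<^sup>2 + s\<^sup>2))))"
  have dd: "d\<^sup>2 + s\<^sup>2 > 0" using s by (simp add: add_nonneg_pos)
  have a0: "a > 0" using assms(1) s dd by (simp add: a_def)
  have a1: "a \<le> 1" by (simp add: a_def)
  have a2: "a \<le> r / (2 * s)" by (simp add: a_def)
  have a3: "a \<le> r * s / (2 * (d\<^sup>2 + s\<^sup>2))" by (simp add: a_def)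
  have as: "a * s \<le> r / 2" using a2 s by (simp add: field_simps)
  have ad: "a * (d\<^sup>2 + s\<^sup>2) \<le> r * s / 2" using a3 dd by (simp add: field_simps)
  define \<rho> where "\<rho> = a * s / 3"
  show "\<exists>\<rho>. 0 < \<rho> \<and> \<rho> < r / 5 \<and>
            (\<forall>x\<in>Z. \<exists>xb\<in>Z. (norm (x - xb))\<^sup>2 + \<rho>\<^sup>2 < 2 * r * \<rho> \<and> cball xb (3 * \<rho>) \<subseteq> Z)"
  proof (intro exI[of _ \<rho>] conjI ballI)
    show "0 < \<rho>" using a0 s by (simp add: \<rho>_def)
    show "\<rho> < r / 5" using as assms(1) by (simp add: \<rho>_def)
    fix x assume xZ: "x \<in> Z"
    then obtain xs where xs: "xs \<in> Z" "norm (x - xs) \<le> d" and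
      C: "\<forall>\<alpha>. 0 < \<alpha> \<and> \<alpha> \<le> 1 \<longrightarrow>
               (\<forall>v. norm v \<le> s \<longrightarrow> x + \<alpha> *\<^sub>R (xs - x) + \<alpha> *\<^sub>R v \<in> Z)" using H by blast
    define xb where "xb = x + a *\<^sub>R (xs - x)"
    have Ca: "\<And>v. norm v \<le> s \<Longrightarrow> xb + a *\<^sub>R v \<in> Z" using C a0 a1 by (simp add: xb_def)
    have "xb \<in> Z" using Ca[of 0] s by simp
    moreover have "cball xb (3 * \<rho>) \<subseteq> Z"
    proof
      fix p assume "p \<in> cball xb (3 * \<rho>)"
      then have "norm (p - xb) \<le> a * s" by (simp add: \<rho>_def dist_norm norm_minus_commute)
      moreover have "norm ((1/a) *\<^sub>R (p - xb)) = norm (p - xb) / a"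
        using a0 by (simp only: norm_scaleR) simp
      ultimately have "norm ((1/a) *\<^sub>R (p - xb)) \<le> s" using a0
        by (simp add: pos_divide_le_eq mult.commute)
      then have "xb + a *\<^sub>R ((1/a) *\<^sub>R (p - xb)) \<in> Z" by (rule Ca)
      then show "p \<in> Z" using a0 by simp
    qed
    moreover have "(norm (x - xb))\<^sup>2 + \<rho>\<^sup>2 < 2 * r * \<rho>"
    proof -
      have "norm (x - xb) = a * norm (x - xs)" using a0
        by (simp add: xb_def norm_minus_commute)
      then have "(norm (x - xb))\<^sup>2 \<le> a\<^sup>2 * d\<^sup>2" using xs(2) a0
        by (simp add: power_mult_distrib power_mono)
      moreover have "a\<^sup>2 * d\<^sup>2 + \<rho>\<^sup>2 < 2 * r * \<rho>"
      proof -
        have "a * (d\<^sup>2 + s\<^sup>2/9) \<le> a * (d\<^sup>2 + s\<^sup>2)" using a0 by (simp add: mult_left_mono)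
        then have "a * (d\<^sup>2 + s\<^sup>2/9) < 2 * r * s / 3" using ad mult_pos_pos[OF assms(1) s] by linarith
        then have "a * (a * (d\<^sup>2 + s\<^sup>2/9)) < a * (2 * r * s / 3)" using a0 by (rule mult_strict_left_mono)
        then show ?thesis by (simp add: \<rho>_def power2_eq_square algebra_simps)
      qed
      ultimately show ?thesis by linarith
    qed
    ultimately show "\<exists>xb\<in>Z. (norm (x - xb))\<^sup>2 + \<rho>\<^sup>2 < 2 * r * \<rho> \<and> cball xb (3 * \<rho>) \<subseteq> Z" by blast
  qed
qed

end
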